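(* For $r>1$ and integer $N\ge1$, $$\eta(r,2,N)=\frac{1}{\sum_{i=0}^N\left(\frac{r}{r-1}\right)^i}<\frac{1}{N+1},$$ and $\lim_{r\to\infty}\eta(r,2,N)=\frac{1}{N+1}$.
   Context: Single item auction with $N$ buyers whose values are i.i.d., each taking values $0<x^1<\dots<x^K$ with probabilities $p^i>0$, $\sum_ip^i=1$. Let $z^i=(\sum_{j=1}^ip^j)^N-(\sum_{j=1}^{i-1}p^j)^N$ and reserve index $t(x,p)=\max\{i: i\in\arg\max_{1\le k\le K}x^k\sum_{j=k}^Kp^j\}$. The efficiency loss ratio of the welfare-maximizing revenue-optimal auction is $\mathrm{ELR}_N(x,p)=\sum_{i=1}^{t(x,p)-1}z^ix^i/\sum_{i=1}^Kz^ix^i$. $\eta(r,K,N)$ is the supremum of $\mathrm{ELR}_N(x,p)$ over all such $p$ and all $x$ with $0<x^1<\dots<x^K\le rx^1$. *)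

theory Defs
  imports Complex_Main
begin

text \<open>Values are indexed x 1, ..., x K and probabilities p 1, ..., p K
  (functions nat => real, only indices 1..K matter).\<close>

definition zprob :: "nat \<Rightarrow> (nat \<Rightarrow> real) \<Rightarrow> nat \<Rightarrow> real" where
  "zprob N p i = (\<Sum>j=1..i. p j) ^ N - (\<Sum>j=1..i-1. p j) ^ N"

definition reserve_index :: "nat \<Rightarrow> (nat \<Rightarrow> real) \<Rightarrow> (nat \<Rightarrow> real) \<Rightarrow> nat" where
  "reserve_index K x p =
     Max {i \<in> {1..K}. \<forall>k\<in>{1..K}. x k * (\<Sum>j=k..K. p j) \<le> x i * (\<Sum>j=i..K. p j)}"

definition ELR :: "nat \<Rightarrow> nat \<Rightarrow> (nat \<Rightarrow> real) \<Rightarrow> (nat \<Rightarrow> real) \<Rightarrow> real" where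
  "ELR N K x p =
     (\<Sum>i=1..reserve_index K x p - 1. zprob N p i * x i) / (\<Sum>i=1..K. zprob N p i * x i)"

definition admissible :: "real \<Rightarrow> nat \<Rightarrow> (nat \<Rightarrow> real) \<Rightarrow> (nat \<Rightarrow> real) \<Rightarrow> bool" where
  "admissible r K x p \<longleftrightarrow>
     (\<forall>i\<in>{1..K}. p i > 0) \<and> (\<Sum>i=1..K. p i) = 1 \<and>
     0 < x 1 \<and> (\<forall>i\<in>{1..K}. \<forall>j\<in>{1..K}. i < j \<longrightarrow> x i < x j) \<and> x K \<le> r * x 1"

definition eta :: "real \<Rightarrow> nat \<Rightarrow> nat \<Rightarrow> real" where
  "eta r K N = Sup {ELR N K x p | x p. admissible r K x p}"

end

theory Submission
  imports Defs "HOL-Real_Asymp.Real_Asymp"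
begin

lemma geo_le:
  fixes u a :: real
  assumes "0 \<le> u" "0 \<le> a" "u * a \<le> 1"
  shows "(\<Sum>i=1..N. u^N * a^i) \<le> (\<Sum>i<N. u^i)"
proof (induction N)
  case 0 then show ?case by simp
next
  case (Suc N)
  have "(\<Sum>i=1..Suc N. u^Suc N * a^i) = u * (\<Sum>i=1..N. u^N * a^i) + (u*a)^Suc N"
    by (simp add: sum_distrib_left power_mult_distrib mult_ac)
  also have "\<dots> \<le> u * (\<Sum>i<N. u^i) + 1"
    using Suc assms by (intro add_mono mult_left_mono power_le_one) (auto simp: mult_nonneg_nonneg)
  also have "\<dots> = (\<Sum>i<Suc N. u^i)"
    by (subst sum.lessThan_Suc_shift) (simp add: sum_distrib_left)
  finally show ?case .
qed

lemma geo_eq: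
  fixes u a :: real
  assumes "u * a = 1"
  shows "(\<Sum>i=1..N. u^N * a^i) = (\<Sum>i<N. u^i)"
proof (induction N)
  case 0 then show ?case by simp
next
  case (Suc N)
  have "(\<Sum>i=1..Suc N. u^Suc N * a^i) = u * (\<Sum>i=1..N. u^N * a^i) + (u*a)^Suc N"
    by (simp add: sum_distrib_left power_mult_distrib mult_ac)
  also have "\<dots> = u * (\<Sum>i<N. u^i) + 1"
    using Suc assms by simp
  also have "\<dots> = (\<Sum>i<Suc N. u^i)"
    by (subst sum.lessThan_Suc_shift) (simp add: sum_distrib_left)
  finally show ?case .
qed

lemma S_split: "(\<Sum>i=0..N. (a::real)^i) = 1 + (\<Sum>i=1..N. a^i)"
  by (simp add: sum.atLeast_Suc_atMost)

lemma sum12: "sum f {1..2::nat} = f 1 + f 2"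
  by (simp add: numeral_2_eq_2)

lemma sum12': "sum f {Suc 0..2::nat} = f 1 + f 2"
  by (simp add: numeral_2_eq_2)

lemma reserve2:
  assumes "p 1 + p 2 = 1"
  shows "reserve_index 2 x p = (if x 1 \<le> x 2 * p 2 then 2 else 1)"
proof -
  have A: "{1..2::nat} = {1,2}" by auto
  have S1: "(\<Sum>j=1..2. p j) = 1" using assms by (simp add: sum12 sum12')
  have S2: "(\<Sum>j=2..2. p j) = p 2" by simp
  have "{i \<in> {1..2}. \<forall>k\<in>{1..2}. x k * (\<Sum>j=k..2. p j) \<le> x i * (\<Sum>j=i..2. p j)}
        = (if x 1 \<le> x 2 * p 2 then (if x 2 * p 2 \<le> x 1 then {1,2} else {2}) else {1})"
    unfolding A using S1 S2 by (auto simp: S1 S2)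
  then show ?thesis unfolding reserve_index_def by auto
qed

lemma zp:
  assumes "N \<ge> 1" "p 1 + p 2 = 1"
  shows "zprob N p 1 = p 1 ^ N" "zprob N p 2 = 1 - p 1 ^ N"
proof -
  have A: "{1..2::nat} = {1,2}" by auto
  show "zprob N p 1 = p 1 ^ N" using assms by (simp add: zprob_def)
  show "zprob N p 2 = 1 - p 1 ^ N" using assms by (simp add: zprob_def sum12 sum12')
qed

lemma ELR2:
  assumes "N \<ge> 1" "p 1 + p 2 = 1"
  shows "ELR N 2 x p = (if x 1 \<le> x 2 * p 2 then p 1 ^ N * x 1 / (p 1 ^ N * x 1 + (1 - p 1 ^ N) * x 2) else 0)"
proof -
  have A: "{1..2::nat} = {1,2}" by auto
  show ?thesis unfolding ELR_def reserve2[OF assms(2)] using zp[OF assms] by (simp add: sum12 sum12')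
qed

lemma bound:
  fixes r :: real
  assumes N: "N \<ge> 1" and r: "r > 1" and adm: "admissible r 2 x p"
  shows "ELR N 2 x p \<le> 1 / (\<Sum>i=0..N. (r / (r - 1)) ^ i)"
proof -
  define a where "a = r / (r - 1)"
  have p1: "p 1 > 0" and p2: "p 2 > 0" and ps: "p 1 + p 2 = 1" and x1: "x 1 > 0"
    and x12: "x 1 < x 2" and x2r: "x 2 \<le> r * x 1"
    using adm unfolding admissible_def by (auto simp: sum12 sum12')
  have Spos: "(\<Sum>i=0..N. a ^ i) > 0"
    using r by (intro sum_pos) (auto simp: a_def)
  show ?thesis
  proof (cases "x 1 \<le> x 2 * p 2")
    case False
    then show ?thesis using ELR2[OF N ps] Spos by (simp add: a_def)
  next
    case True
    define u where "u = p 1"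
    have u0: "0 \<le> u" "u < 1" using p1 p2 ps by (auto simp: u_def)
    have "p 2 = 1 - u" using ps by (simp add: u_def)
    then have x1u: "x 1 \<le> x 2 * (1 - u)" using True by simp
    have ua: "u * a \<le> 1"
    proof -
      have "x 1 \<le> x 2 * (1 - u)" using x1u .
      also have "\<dots> \<le> r * x 1 * (1 - u)" using x2r u0 by (intro mult_right_mono) auto
      finally have "1 \<le> r * (1 - u)" using x1 by (simp add: mult_ac)
      then show ?thesis using r by (simp add: a_def field_simps)
    qed
    define G where "G = (\<Sum>i<N. u^i)"
    have G0: "G \<ge> 0" unfolding G_def using u0 by (intro sum_nonneg) auto
    have Geq: "(1 - u) * G = 1 - u ^ N"
      unfolding G_def by (simp add: one_diff_power_eq)
    have T: "u^N * (\<Sum>i=1..N. a^i) \<le> G"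
      using geo_le[OF u0(1) _ ua, of N] r unfolding G_def by (simp add: sum_distrib_left a_def)
    have e1: "u^N * x 1 * (\<Sum>i=0..N. a ^ i) = u^N * x 1 + x 1 * (u^N * (\<Sum>i=1..N. a^i))"
      by (simp add: S_split algebra_simps)
    have e2: "x 1 * (u^N * (\<Sum>i=1..N. a^i)) \<le> x 1 * G" using T x1 by simp
    have e3: "x 1 * G \<le> x 2 * (1 - u) * G" using x1u G0 by (intro mult_right_mono) auto
    have e4: "x 2 * (1 - u) * G = (1 - u^N) * x 2" using Geq by (simp add: mult_ac)
    have key: "u^N * x 1 * (\<Sum>i=0..N. a ^ i) \<le> u^N * x 1 + (1 - u^N) * x 2"
      using e1 e2 e3 e4 by linarith
    have Dpos: "u^N * x 1 + (1 - u^N) * x 2 > 0"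
    proof -
      have "u^N \<le> 1" using u0 by (simp add: power_le_one)
      moreover have "u^N \<ge> 0" using u0 by simp
      ultimately have "u^N * x 1 + (1 - u^N) * x 2 \<ge> u^N * x 1 + (1 - u^N) * x 1"
        using x12 by (intro add_left_mono mult_left_mono) auto
      then show ?thesis using x1 by (simp add: algebra_simps)
    qed
    have "ELR N 2 x p = u^N * x 1 / (u^N * x 1 + (1 - u^N) * x 2)"
      using ELR2[OF N ps] True by (simp add: u_def)
    also have "\<dots> \<le> 1 / (\<Sum>i=0..N. a ^ i)"
      using key Dpos Spos by (subst divide_le_eq) (simp_all add: field_simps)
    finally show ?thesis by (simp add: a_def)
  qed
qed

lemma attain:
  fixes r :: real
  assumes N: "N \<ge> 1" and r: "r > 1"
  shows "\<exists>x p. admissible r 2 x p \<and> ELR N 2 x p = 1 / (\<Sum>i=0..N. (r / (r - 1)) ^ i)"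
proof -
  define x :: "nat \<Rightarrow> real" where "x = (\<lambda>i. if i = 1 then 1 else r)"
  define p :: "nat \<Rightarrow> real" where "p = (\<lambda>i. if i = 1 then 1 - 1/r else 1/r)"
  define a where "a = r / (r - 1)"
  define u where "u = 1 - 1/r"
  have ps: "p 1 + p 2 = 1" by (simp add: p_def)
  have adm: "admissible r 2 x p"
    unfolding admissible_def using r
    by (auto simp: x_def p_def sum12 field_simps numeral_2_eq_2 le_Suc_eq)
  have ua: "u * a = 1" using r by (simp add: u_def a_def field_simps)
  have u0: "0 < u" using r by (simp add: u_def field_simps)
  define G where "G = (\<Sum>i<N. u^i)"
  have Geq: "(1 - u) * G = 1 - u ^ N"
    unfolding G_def by (simp add: one_diff_power_eq)
  have T: "u^N * (\<Sum>i=1..N. a^i) = G"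
    using geo_eq[OF ua, of N] unfolding G_def by (simp add: sum_distrib_left)
  have G1: "(1 - u^N) * r = G" using Geq r by (simp add: u_def field_simps)
  have Spos: "(\<Sum>i=0..N. a ^ i) > 0"
    using r by (intro sum_pos) (auto simp: a_def)
  have E: "ELR N 2 x p = u^N / (u^N + (1 - u^N) * r)"
    using ELR2[OF N ps] r by (simp add: x_def p_def u_def)
  have "u^N + (1 - u^N) * r = u^N * (\<Sum>i=0..N. a ^ i)"
    using T G1 by (simp add: S_split algebra_simps)
  then have "ELR N 2 x p = 1 / (\<Sum>i=0..N. a ^ i)"
    using E u0 Spos by simp
  then show ?thesis using adm by (auto simp: a_def)
qed

lemma eta_val:
  fixes r :: real
  assumes N: "N \<ge> 1" and r: "r > 1"
  shows "eta r 2 N = 1 / (\<Sum>i=0..N. (r / (r - 1)) ^ i)"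
  unfolding eta_def
proof (rule cSup_eq_maximum)
  show "1 / (\<Sum>i=0..N. (r / (r - 1)) ^ i) \<in> {ELR N 2 x p |x p. admissible r 2 x p}"
    using attain[OF N r] by (metis (mono_tags, lifting) mem_Collect_eq)
qed (use bound[OF N r] in blast)

theorem corollary1:
  fixes N :: nat
  assumes "N \<ge> 1"
  shows "(\<forall>r::real. r > 1 \<longrightarrow>
            eta r 2 N = 1 / (\<Sum>i=0..N. (r / (r - 1)) ^ i) \<and>
            1 / (\<Sum>i=0..N. (r / (r - 1)) ^ i) < 1 / (real N + 1)) \<and>
         ((\<lambda>r. eta r 2 N) \<longlongrightarrow> 1 / (real N + 1)) at_top"
proof (intro conjI allI impI)
  fix r :: real assume r: "r > 1"
  show "eta r 2 N = 1 / (\<Sum>i=0..N. (r / (r - 1)) ^ i)" by (rule eta_val[OF assms r])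
  have a1: "r / (r - 1) > 1" using r by (simp add: field_simps)
  have "(\<Sum>i=0..N. (1::real)) < (\<Sum>i=0..N. (r / (r - 1)) ^ i)"
  proof (rule sum_strict_mono_ex1)
    show "\<forall>i\<in>{0..N}. (1::real) \<le> (r / (r - 1)) ^ i" using a1 by (auto intro: one_le_power)
    show "\<exists>i\<in>{0..N}. (1::real) < (r / (r - 1)) ^ i"
      using a1 assms by (intro bexI[of _ N]) (auto intro: one_less_power)
  qed simp
  then have "real N + 1 < (\<Sum>i=0..N. (r / (r - 1)) ^ i)" by simp
  then show "1 / (\<Sum>i=0..N. (r / (r - 1)) ^ i) < 1 / (real N + 1)"
    by (intro divide_strict_left_mono) auto
next
  have lim: "((\<lambda>r::real. r / (r - 1)) \<longlongrightarrow> 1) at_top" by real_asymp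
  have "((\<lambda>r::real. 1 / (\<Sum>i=0..N. (r / (r - 1)) ^ i)) \<longlongrightarrow> 1 / (\<Sum>i=0..N. (1::real) ^ i)) at_top"
    by (intro tendsto_intros lim) simp
  then have L: "((\<lambda>r::real. 1 / (\<Sum>i=0..N. (r / (r - 1)) ^ i)) \<longlongrightarrow> 1 / (real N + 1)) at_top"
    by (simp add: add.commute)
  show "((\<lambda>r. eta r 2 N) \<longlongrightarrow> 1 / (real N + 1)) at_top"
    by (rule Lim_transform_eventually[OF L])
       (auto intro: eventually_mono[OF eventually_gt_at_top[of 1]] simp: eta_val[OF assms])
qed

end
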